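(* Let $n,d$ be positive integers. For all ${X},{Y}\in \mathbb{R}^{d\times n}$ we have $$d_{\mathcal{D}}({X},{Y})\leq 2n^{3/2}\, d_{\mathcal{G}_{\pm}}({X},{Y}).$$ Moreover, for all ${X},{Y}\in\mathbb{R}^{d\times n}$ satisfying $\|{X}\|_{1,2}\leq 1$ and $\|{Y}\|_{1,2}\leq 1$, we have $$\frac{1}{4n+2}\, d_{\mathcal{G}_{\pm}}^2({X},{Y}) \leq d_{\mathcal{D}}({X},{Y}).$$
   Context: A point set is a matrix ${X}\in\mathbb{R}^{d\times n}$ with columns $x_1,\dots,x_n\in\mathbb{R}^d$. The group $\mathcal{G}_{\pm}=O(d)\rtimes\mathbb{R}^d\times S_n$ acts on point sets by permuting the columns, applying a common orthogonal matrix to all columns, and adding a common translation vector to all columns. The Procrustes Matching metric is $$d_{\mathcal{G}_{\pm}}({X},{Y})=\Big[\min_{(\pi,R,t)\in S_n\times O(d)\times\mathbb{R}^d}\sum_{j=1}^n\|x_j-Ry_{\pi(j)}+t\|_2^2\Big]^{1/2}=\min_{g\in\mathcal{G}_{\pm}}\|{X}-g{Y}\|_F.$$ The Hard-Gromov-Wasserstein distance is $$d_{\mathcal{D}}({X},{Y})=\min_{\pi\in S_n}\sum_{i,j=1}^n\big|\,\|x_i-x_j\|_2-\|y_{\pi(i)}-y_{\pi(j)}\|_2\,\big|.$$ $\|{X}\|_{1,2}=\max_{1\le i\le n}\|x_i\|_2$. *)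

theory Defs
  imports "HOL-Analysis.Analysis" "HOL-Combinatorics.Permutations"
begin

text \<open>A point set X in R^{d x n}: columns indexed by the finite type 'n,
  each column a vector in R^d = real^'d.\<close>

definition procrustes_dist :: "('n::finite \<Rightarrow> real^'d) \<Rightarrow> ('n \<Rightarrow> real^'d) \<Rightarrow> real" where
  "procrustes_dist X Y =
     sqrt (Inf {(\<Sum>j\<in>UNIV. (norm (X j - R *v Y (\<pi> j) + t))\<^sup>2) | \<pi> R t.
                 \<pi> permutes (UNIV::'n set) \<and> orthogonal_matrix (R :: real^'d^'d)})"

definition hard_gw_dist :: "('n::finite \<Rightarrow> real^'d) \<Rightarrow> ('n \<Rightarrow> real^'d) \<Rightarrow> real" where
  "hard_gw_dist X Y =
     Min {(\<Sum>i\<in>UNIV. \<Sum>j\<in>UNIV. \<bar>norm (X i - X j) - norm (Y (\<pi> i) - Y (\<pi> j))\<bar>) | \<pi>.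
                 \<pi> permutes (UNIV::'n set)}"

definition norm_1_2 :: "('n::finite \<Rightarrow> real^'d) \<Rightarrow> real" where
  "norm_1_2 X = Max (range (\<lambda>i. norm (X i)))"

end

theory Submission
  imports Defs
begin


definition outer :: "real^'d \<Rightarrow> real^'d \<Rightarrow> real^'d^'d" where
  "outer u v = (\<chi> i j. u$i * v$j)"

lemma outer_mulv: "outer u v *v w = (v \<bullet> w) *\<^sub>R u"
  by (simp add: vec_eq_iff matrix_vector_mult_def outer_def inner_vec_def sum_distrib_left mult.assoc mult.commute mult.left_commute)

lemma outer_trace: "trace (outer u v ** Z) = v \<bullet> (Z *v u)"
  apply (simp add: trace_def matrix_matrix_mult_def outer_def inner_vec_def matrix_vector_mult_def sum_distrib_left)
  apply (subst sum.swap) apply (simp add: mult.assoc mult.commute mult.left_commute)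
  done

definition reflm :: "real^'d \<Rightarrow> real^'d^'d" where
  "reflm u = mat 1 - (2 / (u \<bullet> u)) *\<^sub>R outer u u"

lemma scaleR_mm: "((c::real) *\<^sub>R (A::real^'m^'n)) ** B = c *\<^sub>R (A ** B)"
  by (simp add: vec_eq_iff matrix_matrix_mult_def sum_distrib_left mult.assoc scaleR_vec_def real_scaleR_def)

lemma scaleR_mv: "((c::real) *\<^sub>R (A::real^'m^'n)) *v w = c *\<^sub>R (A *v w)"
  by (simp add: vec_eq_iff matrix_vector_mult_def sum_distrib_left mult.assoc scaleR_vec_def real_scaleR_def)

lemma diff_mm: "((A::real^'m^'n) - B) ** C = A ** C - B ** C"
  by (simp add: vec_eq_iff matrix_matrix_mult_def sum_subtractf algebra_simps)

lemma trace_scaleR: "trace ((c::real) *\<^sub>R A) = c * trace A"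
  by (simp add: trace_def sum_distrib_left)

lemma refl_mulv: "reflm u *v w = w - ((2 / (u \<bullet> u)) * (u \<bullet> w)) *\<^sub>R u"
  by (simp add: reflm_def matrix_vector_mult_diff_rdistrib scaleR_mv outer_mulv)

lemma refl_trace: "trace (reflm u ** Z) = trace Z - (2 / (u \<bullet> u)) * (u \<bullet> (Z *v u))"
  by (simp add: reflm_def diff_mm trace_sub scaleR_mm trace_scaleR outer_trace)

lemma refl_orth:
  assumes "u \<noteq> 0" shows "orthogonal_matrix (reflm u)"
proof -
  have t: "transpose (reflm u) = reflm u"
    by (simp add: reflm_def vec_eq_iff transpose_def outer_def mat_def mult.commute)
  have "reflm u ** reflm u = mat 1"
  proof (rule matrix_eq[THEN iffD2], intro allI)
    fix w
    have uu: "u \<bullet> u \<noteq> 0" using assms by simp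
    define a where "a = (2 / (u \<bullet> u)) * (u \<bullet> w)"
    have 1: "reflm u *v w = w - a *\<^sub>R u" by (simp add: refl_mulv a_def)
    have 2: "u \<bullet> (w - a *\<^sub>R u) = - (u \<bullet> w)"
      using uu by (simp add: inner_diff_right a_def field_simps)
    have "(reflm u ** reflm u) *v w = reflm u *v (w - a *\<^sub>R u)"
      by (simp add: matrix_vector_mul_assoc[symmetric] 1)
    also have "\<dots> = w - a *\<^sub>R u + a *\<^sub>R u"
      by (simp only: refl_mulv 2) (simp add: a_def)
    finally show "(reflm u ** reflm u) *v w = mat 1 *v w" by simp
  qed
  then show ?thesis using t by (simp add: orthogonal_matrix)
qed




lemma quad_zero:
  fixes \<alpha> \<beta> :: real
  assumes "\<And>t. \<beta> * t \<le> \<alpha> * t^2" shows "\<beta> = 0"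
proof (rule ccontr)
  assume nz: "\<beta> \<noteq> 0"
  define c where "c = 2 * (\<bar>\<alpha>\<bar> + 1)"
  have c: "c > 0" by (simp add: c_def add_pos_nonneg)
  have "\<beta> * (\<beta> / c) \<le> \<alpha> * (\<beta> / c)^2" by (rule assms)
  then have "\<beta>^2 * c \<le> \<alpha> * \<beta>^2" using c by (simp add: power2_eq_square field_simps)
  moreover have "\<alpha> * \<beta>^2 \<le> \<bar>\<alpha>\<bar> * \<beta>^2" by (simp add: mult_right_mono)
  moreover have "\<beta>^2 > 0" using nz by simp
  moreover have "\<bar>\<alpha>\<bar> * \<beta>^2 < c * \<beta>^2"
    using \<open>\<beta>^2 > 0\<close> by (intro mult_strict_right_mono) (auto simp: c_def)
  ultimately show False by (simp add: mult.commute)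
qed

lemma opt_exists:
  fixes N :: "real^'d^'d"
  shows "\<exists>R. orthogonal_matrix R \<and> (\<forall>G. orthogonal_matrix G \<longrightarrow> trace (G ** R ** N) \<le> trace (R ** N))"
proof -
  have cl: "closed {A::real^'d^'d. transpose A ** A = mat 1}"
    by (intro closed_Collect_eq continuous_on_vec_lambda)
       (auto simp: transpose_def matrix_matrix_mult_def intro!: continuous_intros continuous_on_vec_lambda)
  have bd: "bounded {A::real^'d^'d. orthogonal_matrix A}"
  proof -
    have "norm A \<le> real CARD('d)" if "orthogonal_matrix A" for A :: "real^'d^'d"
    proof -
      have r: "norm (A $ i) = 1" for i
        using that unfolding orthogonal_matrix_orthonormal_rows by (metis row_def vec_nth_inverse)
      have "norm A \<le> (\<Sum>i\<in>UNIV. norm (A $ i))"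
        unfolding norm_vec_def by (rule L2_set_le_sum) simp
      also have "\<dots> = real CARD('d)" using r by simp
      finally show ?thesis .
    qed
    then show ?thesis unfolding bounded_iff by blast
  qed
  have cp: "compact {A::real^'d^'d. orthogonal_matrix A}"
    using cl bd by (simp add: compact_eq_bounded_closed orthogonal_matrix)
  have ne: "{A::real^'d^'d. orthogonal_matrix A} \<noteq> {}" using orthogonal_matrix_id by blast
  have ct: "continuous_on {A::real^'d^'d. orthogonal_matrix A} (\<lambda>A. trace (A ** N))"
    unfolding trace_def matrix_matrix_mult_def by (auto intro!: continuous_intros)
  obtain R where R: "orthogonal_matrix R" and mx: "\<And>A. orthogonal_matrix A \<Longrightarrow> trace (A ** N) \<le> trace (R ** N)"
    using continuous_attains_sup[OF cp ne ct] by auto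
  show ?thesis
    by (rule exI[of _ R]) (use R mx orthogonal_matrix_mul in auto)
qed

lemma opt_psd:
  assumes opt: "\<And>G. orthogonal_matrix G \<Longrightarrow> trace (G ** K) \<le> trace (K::real^'d^'d)"
  shows "0 \<le> v \<bullet> (K *v v)"
proof (cases "v = 0")
  case False
  have "trace (reflm v ** K) \<le> trace K" using opt refl_orth False by blast
  then have "0 \<le> (2 / (v \<bullet> v)) * (v \<bullet> (K *v v))" by (simp add: refl_trace)
  moreover have "v \<bullet> v > 0" using False by simp
  ultimately show ?thesis by (simp add: zero_le_divide_iff)
qed simp

lemma opt_sym_gen:
  assumes opt: "\<And>G. orthogonal_matrix G \<Longrightarrow> trace (G ** K) \<le> trace (K::real^'d^'d)"
    and b: "b \<bullet> b = 1" and w: "w \<bullet> w = 1" and bw: "b \<bullet> w = 0"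
  shows "b \<bullet> (K *v w) = w \<bullet> (K *v b)"
proof -
  let ?q = "\<lambda>u v. u \<bullet> (K *v v)"
  have "(?q b w - ?q w b) * t \<le> (?q b b + ?q w w) * t^2" for t
  proof -
    define a where "a = b + t *\<^sub>R w"
    have wb: "w \<bullet> b = 0" using bw by (simp add: inner_commute)
    have aa: "a \<bullet> a = 1 + t^2"
      by (simp add: a_def inner_add_left inner_add_right b w bw wb power2_eq_square)
    have pos0: "1 + t^2 > 0" by (simp add: add_pos_nonneg)
    have a0: "a \<noteq> 0" using aa pos0 by auto
    have ab: "a \<bullet> b = 1" by (simp add: a_def inner_add_left b wb)
    have orth: "orthogonal_matrix (reflm a ** reflm b)"
      using refl_orth a0 b by (metis orthogonal_matrix_mul inner_zero_left zero_neq_one)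
    have "trace ((reflm a ** reflm b) ** K) \<le> trace K" using opt orth by blast
    also have "trace ((reflm a ** reflm b) ** K) = trace (reflm a ** (reflm b ** K))"
      by (simp add: matrix_mul_assoc)
    also have "\<dots> = trace K - 2 * ?q b b - (2 / (1 + t^2)) * (a \<bullet> ((reflm b ** K) *v a))"
      by (simp add: refl_trace aa b)
    also have "(reflm b ** K) *v a = K *v a - (2 * ?q b a) *\<^sub>R b"
      by (simp add: matrix_vector_mul_assoc[symmetric] refl_mulv b)
    finally have 1: "(2 / (1 + t^2)) * (a \<bullet> (K *v a) - 2 * ?q b a) + 2 * ?q b b \<ge> 0"
      by (simp add: inner_diff_right ab algebra_simps)
    have qa: "?q b a = ?q b b + t * ?q b w"
      by (simp add: a_def matrix_vector_right_distrib matrix_vector_mult_scaleR inner_add_right)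
    have aKa: "a \<bullet> (K *v a) = ?q b b + t * ?q b w + t * ?q w b + t^2 * ?q w w"
      by (simp add: a_def matrix_vector_right_distrib matrix_vector_mult_scaleR inner_add_right
          inner_add_left power2_eq_square algebra_simps)
    have pos: "1 + t^2 > 0" by (simp add: add_pos_nonneg)
    from 1 have "(a \<bullet> (K *v a) - 2 * ?q b a) * 2 + 2 * ?q b b * (1 + t^2) \<ge> 0"
      using pos by (simp add: field_simps)
    then show ?thesis unfolding qa aKa by (simp add: algebra_simps power2_eq_square)
  qed
  then have "?q b w - ?q w b = 0" by (intro quad_zero) auto
  then show ?thesis by simp
qed

lemma opt_sym:
  assumes opt: "\<And>G. orthogonal_matrix G \<Longrightarrow> trace (G ** K) \<le> trace (K::real^'d^'d)"
  shows "transpose K = K"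
proof -
  have "K $ k $ l = K $ l $ k" for k l
  proof (cases "k = l")
    case False
    have h1: "axis k (1::real) \<bullet> axis k 1 = 1" by (simp add: inner_axis_axis)
    have h2: "axis l (1::real) \<bullet> axis l 1 = 1" by (simp add: inner_axis_axis)
    have h3: "axis k (1::real) \<bullet> axis l 1 = 0" using False by (simp add: inner_axis_axis)
    have "axis k (1::real) \<bullet> (K *v axis l 1) = axis l 1 \<bullet> (K *v axis k 1)"
      by (rule opt_sym_gen[OF opt h1 h2 h3])
    then show ?thesis by (simp only: matrix_vector_mult_basis inner_axis' column_def) simp
  qed simp
  then show ?thesis by (simp add: vec_eq_iff transpose_def)
qed




lemma trace_tm: "trace (transpose (A::real^'n^'d) ** B) = (\<Sum>j\<in>UNIV. column j A \<bullet> column j B)"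
  by (simp add: trace_def matrix_matrix_mult_def transpose_def column_def inner_vec_def)

lemma column_mm: "column j ((A::real^'m^'n) ** B) = A *v column j B"
  by (simp add: column_def matrix_matrix_mult_def matrix_vector_mult_def vec_eq_iff)

lemma quadform: "v \<bullet> (((F::real^'n^'d) ** transpose F) *v v) = (norm (transpose F *v v))^2"
proof -
  have "v \<bullet> ((F ** transpose F) *v v) = v \<bullet> (F *v (transpose F *v v))"
    by (simp only: matrix_vector_mul_assoc)
  also have "\<dots> = (v v* F) \<bullet> (transpose F *v v)" by (simp only: dot_lmul_matrix)
  also have "\<dots> = (norm (transpose F *v v))^2" by (simp add: power2_norm_eq_inner)
  finally show ?thesis .
qed

lemma quadform2: "v \<bullet> (((X::real^'n^'d) ** transpose Y) *v v) = (transpose X *v v) \<bullet> (transpose Y *v v)"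
proof -
  have "v \<bullet> ((X ** transpose Y) *v v) = v \<bullet> (X *v (transpose Y *v v))"
    by (simp only: matrix_vector_mul_assoc)
  also have "\<dots> = (v v* X) \<bullet> (transpose Y *v v)" by (simp only: dot_lmul_matrix)
  finally show ?thesis by simp
qed

lemma transpose_addm: "transpose ((A::real^'n^'m) + B) = transpose A + transpose B"
  by (simp add: transpose_def vec_eq_iff)
lemma transpose_diffm: "transpose ((A::real^'n^'m) - B) = transpose A - transpose B"
  by (simp add: transpose_def vec_eq_iff)
lemma mv_add: "((A::real^'n^'m) + B) *v v = A *v v + B *v v"
  by (simp add: matrix_vector_mult_def vec_eq_iff sum.distrib algebra_simps)
lemma mv_diff: "((A::real^'n^'m) - B) *v v = A *v v - B *v v"
  by (simp add: matrix_vector_mult_def vec_eq_iff sum_subtractf algebra_simps)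




lemma mat_mv: "mat c *v (v::real^'n) = c *\<^sub>R v"
proof -
  have "(\<Sum>j\<in>UNIV. (mat c :: real^'n^'n) $ i $ j * v $ j) = c * v $ i" for i
  proof -
    have "(\<Sum>j\<in>UNIV. (mat c :: real^'n^'n) $ i $ j * v $ j) = (\<Sum>j\<in>UNIV. if j = i then c * v $ j else 0)"
      by (rule sum.cong) (auto simp: mat_def)
    then show ?thesis by simp
  qed
  then show ?thesis by (simp add: vec_eq_iff matrix_vector_mult_def)
qed

lemma mm_mat: "(A::real^'n^'m) ** mat c = c *\<^sub>R A"
  by (simp add: vec_eq_iff matrix_matrix_mult_def mat_def if_distrib cong: if_cong)

lemma D2: fixes X Y :: "real^'n^'d"
  shows "2 *\<^sub>R (transpose X ** X - transpose Y ** Y) = transpose (X - Y) ** (X + Y) + transpose (X + Y) ** (X - Y)"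
proof -
  have "(transpose (X - Y) ** (X + Y) + transpose (X + Y) ** (X - Y)) $ i $ j =
        2 * ((transpose X ** X) $ i $ j - (transpose Y ** Y) $ i $ j)" for i j
  proof -
    have "(transpose (X - Y) ** (X + Y) + transpose (X + Y) ** (X - Y)) $ i $ j =
       (\<Sum>k\<in>UNIV. (X$k$i - Y$k$i) * (X$k$j + Y$k$j) + (X$k$i + Y$k$i) * (X$k$j - Y$k$j))"
      by (simp add: matrix_matrix_mult_def transpose_def sum.distrib)
    also have "\<dots> = (\<Sum>k\<in>UNIV. 2 * (X$k$i * X$k$j - Y$k$i * Y$k$j))"
      by (rule sum.cong) (simp_all add: algebra_simps)
    also have "\<dots> = 2 * ((transpose X ** X) $ i $ j - (transpose Y ** Y) $ i $ j)"
      by (simp add: matrix_matrix_mult_def transpose_def sum_subtractf sum_distrib_left)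
    finally show ?thesis .
  qed
  then show ?thesis by (simp add: vec_eq_iff)
qed

lemma mm_scaleR_right: "(A::real^'m^'n) ** ((c::real) *\<^sub>R B) = c *\<^sub>R (A ** B)"
  by (simp add: vec_eq_iff matrix_matrix_mult_def sum_distrib_left scaleR_vec_def real_scaleR_def algebra_simps)

lemma pm_sq: "(norm (a + b))^2 - (norm (a - b))^2 = 4 * (a \<bullet> (b::'a::real_inner))"
  by (simp add: power2_norm_eq_inner inner_add_left inner_add_right inner_diff_left inner_diff_right inner_commute)

lemma mm_diff_left: "(A::real^'m^'n) ** (B - C) = A ** B - A ** C"
  by (simp add: vec_eq_iff matrix_matrix_mult_def sum_subtractf algebra_simps)

lemma core:
  fixes X Y :: "real^'n^'d"
  assumes sym: "transpose (X ** transpose Y) = X ** transpose Y"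
    and psd: "\<And>v. 0 \<le> v \<bullet> ((X ** transpose Y) *v v)"
  shows "trace ((X - Y) ** transpose (X - Y)) \<le>
           2 * (\<Sum>j\<in>UNIV. norm (column j (transpose X ** X - transpose Y ** Y)))"
proof -
  define E where "E = X - Y"
  define F where "F = X + Y"
  define \<Delta> where "\<Delta> = transpose X ** X - transpose Y ** Y"
  define P where "P = E ** transpose E"
  define Q where "Q = F ** transpose F"
  define S where "S = F ** transpose E"
  define B where "B = (\<Sum>j\<in>UNIV. norm (column j \<Delta>))"
  have QP: "(norm (transpose E *v v))^2 \<le> (norm (transpose F *v v))^2" for v
  proof -
    have f: "transpose F *v v = transpose X *v v + transpose Y *v v"
      by (simp only: F_def transpose_addm mv_add)
    have e: "transpose E *v v = transpose X *v v - transpose Y *v v"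
      by (simp only: E_def transpose_diffm mv_diff)
    have "0 \<le> (transpose X *v v) \<bullet> (transpose Y *v v)"
      using psd[of v] by (simp only: quadform2)
    then show ?thesis unfolding f e using pm_sq[of "transpose X *v v" "transpose Y *v v"] by linarith
  qed
  have m: "(\<Sum>k\<in>UNIV. X$i$k * Y$j$k) = (\<Sum>k\<in>UNIV. X$j$k * Y$i$k)" for i j
  proof -
    have "(X ** transpose Y) $ j $ i = (transpose (X ** transpose Y)) $ j $ i" using sym by simp
    then show ?thesis by (simp add: matrix_matrix_mult_def transpose_def mult.commute)
  qed
  have Ssym: "transpose S = S"
  proof -
    have "S $ j $ i = S $ i $ j" for i j
    proof -
      have "S $ i $ j - S $ j $ i = (\<Sum>k\<in>UNIV. (X$i$k + Y$i$k) * (X$j$k - Y$j$k) - (X$j$k + Y$j$k) * (X$i$k - Y$i$k))"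
        by (simp add: S_def E_def F_def matrix_matrix_mult_def transpose_def sum_subtractf)
      also have "\<dots> = (\<Sum>k\<in>UNIV. 2 * (X$j$k * Y$i$k) - 2 * (X$i$k * Y$j$k))"
        by (rule sum.cong) (simp_all add: algebra_simps)
      also have "\<dots> = 2 * ((\<Sum>k\<in>UNIV. X$j$k * Y$i$k) - (\<Sum>k\<in>UNIV. X$i$k * Y$j$k))"
        by (simp add: sum_subtractf sum_distrib_left)
      finally have "S $ i $ j - S $ j $ i = 2 * ((\<Sum>k\<in>UNIV. X$j$k * Y$i$k) - (\<Sum>k\<in>UNIV. X$i$k * Y$j$k))" .
      then show ?thesis using m[of i j] by simp
    qed
    then show ?thesis by (simp add: vec_eq_iff transpose_def)
  qed
  have D2: "2 *\<^sub>R \<Delta> = transpose E ** F + transpose F ** E"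
    unfolding \<Delta>_def E_def F_def by (rule D2)
  have main: "trace P \<le> 2 * B + \<epsilon> * real CARD('n)" if \<epsilon>: "\<epsilon> > 0" for \<epsilon>
  proof -
    define L where "L = Q + mat \<epsilon>"
    have Lsym: "transpose L = L"
      by (simp add: L_def Q_def transpose_addm matrix_transpose_mul)
    have Lq: "v \<bullet> (L *v v) = (norm (transpose F *v v))^2 + \<epsilon> * (v \<bullet> v)" for v
      by (simp only: L_def mv_add inner_add_right Q_def quadform mat_mv inner_scaleR_right)
    have Linj: "\<forall>v. L *v v = 0 \<longrightarrow> v = 0"
    proof (intro allI impI)
      fix v assume "L *v v = 0"
      then have "(norm (transpose F *v v))^2 + \<epsilon> * (v \<bullet> v) = 0" using Lq[of v] by simp
      moreover have "0 \<le> (norm (transpose F *v v))^2" by simp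
      moreover have "0 \<le> \<epsilon> * (v \<bullet> v)" using \<epsilon> by simp
      ultimately have "\<epsilon> * (v \<bullet> v) = 0" by linarith
      then show "v = 0" using \<epsilon> by simp
    qed
    obtain A where AL: "A ** L = mat 1" using matrix_left_invertible_ker[of L] Linj by blast
    have LA: "L ** A = mat 1" using AL matrix_left_right_inverse by blast
    have Asym: "transpose A = A"
    proof -
      have "transpose A ** L = mat 1"
        using LA by (metis Lsym matrix_transpose_mul transpose_mat)
      have "(transpose A ** L) ** A = transpose A ** (L ** A)"
        by (simp only: matrix_mul_assoc)
      then show ?thesis using \<open>transpose A ** L = mat 1\<close> LA by simp
    qed
    have LAv: "L *v (A *v v) = v" for v
      by (simp add: matrix_vector_mul_assoc LA)
    have LinnerSym: "(L *v w) \<bullet> w = w \<bullet> (L *v w)" for w by (simp add: inner_commute)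
    have Apsd: "0 \<le> v \<bullet> (A *v v)" for v
    proof -
      have "v \<bullet> (A *v v) = (A *v v) \<bullet> (L *v (A *v v))"
        by (simp add: LAv inner_commute)
      also have "\<dots> \<ge> 0" unfolding Lq using \<epsilon> by (intro add_nonneg_nonneg mult_nonneg_nonneg) auto
      finally show ?thesis .
    qed
    have colbound: "norm (transpose F *v (A *v column j E)) \<le> 1"
      and cbound: "column j E \<bullet> (A *v column j E) \<le> 1" for j
    proof -
      define e where "e = column j E"
      define w where "w = A *v e"
      define c where "c = e \<bullet> w"
      have c1: "c = (norm (transpose F *v w))^2 + \<epsilon> * (w \<bullet> w)"
      proof -
        have "c = (L *v w) \<bullet> w" by (simp add: c_def w_def LAv)
        also have "\<dots> = w \<bullet> (L *v w)" by (simp add: inner_commute)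
        finally show ?thesis by (simp only: Lq)
      qed
      have c2: "(transpose E *v w) $ j = c"
        by (simp add: c_def e_def column_def inner_vec_def vector_matrix_mult_def mult.commute)
      have "c^2 \<le> (norm (transpose E *v w))^2"
        using component_le_norm_cart[of "transpose E *v w" j] c2
        by (metis abs_ge_zero power2_abs power_mono)
      also have "\<dots> \<le> (norm (transpose F *v w))^2" by (rule QP)
      finally have c3: "c^2 \<le> (norm (transpose F *v w))^2" .
      have ww: "0 \<le> \<epsilon> * (w \<bullet> w)" using \<epsilon> by simp
      have "c^2 \<le> c" using c1 c3 ww by linarith
      then have c4: "c \<le> 1"
      proof (rule contrapos_pp)
        assume "\<not> c \<le> 1"
        then have "c * 1 < c * c" by (intro mult_strict_left_mono) auto
        then show "\<not> c^2 \<le> c" by (simp add: power2_eq_square)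
      qed
      have "(norm (transpose F *v w))^2 \<le> 1" using c1 c4 ww by linarith
      then show "norm (transpose F *v (A *v column j E)) \<le> 1"
        unfolding w_def e_def by (simp add: power_le_one_iff abs_le_square_iff)
      show "column j E \<bullet> (A *v column j E) \<le> 1" using c4 unfolding c_def w_def e_def .
    qed
    define W where "W = transpose F ** A ** E"
    have colW: "column j W = transpose F *v (A *v column j E)" for j
      by (simp only: W_def column_mm matrix_mul_assoc[symmetric])
    define T where "T = (\<Sum>j\<in>UNIV. column j W \<bullet> column j \<Delta>)"
    have TB: "T \<le> B"
      unfolding T_def B_def
    proof (rule sum_mono)
      fix j
      have "column j W \<bullet> column j \<Delta> \<le> norm (column j W) * norm (column j \<Delta>)"
        by (rule norm_cauchy_schwarz)
      also have "\<dots> \<le> 1 * norm (column j \<Delta>)"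
        by (rule mult_right_mono) (simp only: colW colbound, simp)
      finally show "column j W \<bullet> column j \<Delta> \<le> norm (column j \<Delta>)" by simp
    qed
    have tW: "transpose W = transpose E ** (A ** F)"
      by (simp add: W_def matrix_transpose_mul Asym)
    have T2: "2 * T = trace (transpose W ** (transpose E ** F)) + trace (transpose W ** (transpose F ** E))"
    proof -
      have "2 * T = trace (transpose W ** (2 *\<^sub>R \<Delta>))"
        by (simp only: mm_scaleR_right trace_scaleR T_def trace_tm)
      also have "\<dots> = trace (transpose W ** (transpose E ** F)) + trace (transpose W ** (transpose F ** E))"
        by (simp only: D2 matrix_add_ldistrib trace_add)
      finally show ?thesis .
    qed
    have t1: "trace (transpose W ** (transpose E ** F)) = trace (transpose S ** (A ** S))"
    proof -
      have "trace (transpose W ** (transpose E ** F)) = trace (((transpose E ** (A ** F)) ** transpose E) ** F)"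
        by (simp only: tW matrix_mul_assoc)
      also have "\<dots> = trace (F ** ((transpose E ** (A ** F)) ** transpose E))"
        by (rule trace_mul_sym)
      also have "\<dots> = trace (S ** (A ** S))"
        by (simp only: S_def matrix_mul_assoc)
      finally show ?thesis by (simp only: Ssym)
    qed
    have t1pos: "trace (transpose S ** (A ** S)) \<ge> 0"
      by (simp only: trace_tm column_mm) (rule sum_nonneg, rule Apsd)
    have t2: "trace (transpose W ** (transpose F ** E)) = trace P - \<epsilon> * trace (A ** P)"
    proof -
      have "trace (transpose W ** (transpose F ** E)) = trace (transpose E ** ((A ** Q) ** E))"
        by (simp only: tW Q_def matrix_mul_assoc)
      also have "\<dots> = trace (((A ** Q) ** E) ** transpose E)"
        by (rule trace_mul_sym)
      also have "\<dots> = trace ((A ** Q) ** P)"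
        by (simp only: P_def matrix_mul_assoc)
      also have "A ** Q = mat 1 - \<epsilon> *\<^sub>R A"
      proof -
        have "Q = L - mat \<epsilon>" by (simp add: L_def)
        then show ?thesis by (simp add: mm_diff_left AL mm_mat)
      qed
      finally show ?thesis by (simp add: diff_mm trace_sub scaleR_mm trace_scaleR)
    qed
    have tAP: "trace (A ** P) \<le> real CARD('n)"
    proof -
      have "trace (A ** P) = trace (transpose E ** (A ** E))"
        by (simp only: P_def matrix_mul_assoc trace_mul_sym[of "A ** E" "transpose E"])
      also have "\<dots> = (\<Sum>j\<in>UNIV. column j E \<bullet> (A *v column j E))"
        by (simp only: trace_tm column_mm)
      also have "\<dots> \<le> (\<Sum>j\<in>(UNIV::'n set). 1)"
        by (rule sum_mono) (rule cbound)
      finally show ?thesis by simp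
    qed
    have "\<epsilon> * trace (A ** P) \<le> \<epsilon> * real CARD('n)"
      using tAP \<epsilon> by (intro mult_left_mono) auto
    then have "trace P - \<epsilon> * real CARD('n) \<le> 2 * T"
      using T2 t1 t1pos t2 by linarith
    then show ?thesis using TB by linarith
  qed
  have "trace P \<le> 2 * B"
  proof (rule field_le_epsilon)
    fix e :: real assume e: "0 < e"
    have n: "real CARD('n) > 0" by simp
    have "trace P \<le> 2 * B + (e / real CARD('n)) * real CARD('n)"
      using main[of "e / real CARD('n)"] e n by simp
    then show "trace P \<le> 2 * B + e" using n by simp
  qed
  then show ?thesis by (simp add: P_def E_def B_def \<Delta>_def)
qed




lemma center_gram:
  fixes x :: "'n::finite \<Rightarrow> real^'d"
  defines "c \<equiv> (1 / real CARD('n)) *\<^sub>R (\<Sum>k\<in>UNIV. x k)"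
  defines "r \<equiv> (\<lambda>i. (1 / real CARD('n)) * (\<Sum>k\<in>UNIV. (norm (x i - x k))^2))"
  shows "(x i - c) \<bullet> (x j - c) =
     -(1/2) * ((norm (x i - x j))^2 - r i - r j + (1 / real CARD('n)) * (\<Sum>k\<in>UNIV. r k))"
proof -
  define n where "n = real CARD('n)"
  have n0: "n > 0" by (simp add: n_def)
  define x' where "x' = (\<lambda>k. x k - c)"
  have sum0: "(\<Sum>k\<in>UNIV. x' k) = 0"
  proof -
    have "(\<Sum>k\<in>UNIV. x' k) = (\<Sum>k\<in>UNIV. x k) - n *\<^sub>R c"
      by (simp del: sum_constant add: x'_def sum_subtractf n_def sum_constant_scaleR)
    also have "n *\<^sub>R c = (\<Sum>k\<in>UNIV. x k)" using n0 by (simp add: c_def n_def)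
    finally show ?thesis by simp
  qed
  have d: "(norm (x a - x b))^2 = x' a \<bullet> x' a + x' b \<bullet> x' b - 2 * (x' a \<bullet> x' b)" for a b
  proof -
    have "x a - x b = x' a - x' b" by (simp add: x'_def)
    then show ?thesis
      by (simp add: power2_norm_eq_inner inner_diff_left inner_diff_right inner_commute)
  qed
  define m where "m = (1/n) * (\<Sum>k\<in>UNIV. x' k \<bullet> x' k)"
  have r: "r a = x' a \<bullet> x' a + m" for a
  proof -
    have "(\<Sum>k\<in>UNIV. (norm (x a - x k))^2) =
          n * (x' a \<bullet> x' a) + (\<Sum>k\<in>UNIV. x' k \<bullet> x' k) - 2 * (x' a \<bullet> (\<Sum>k\<in>UNIV. x' k))"
      by (simp add: d sum.distrib sum_subtractf sum_distrib_left inner_sum_right n_def)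
    then have "(\<Sum>k\<in>UNIV. (norm (x a - x k))^2) = n * (x' a \<bullet> x' a) + (\<Sum>k\<in>UNIV. x' k \<bullet> x' k)"
      by (simp add: sum0)
    then show ?thesis using n0 by (simp add: r_def m_def n_def[symmetric] field_simps)
  qed
  have s: "(1 / n) * (\<Sum>k\<in>UNIV. r k) = 2 * m"
  proof -
    have e1: "(\<Sum>k\<in>UNIV. r k) = (\<Sum>k\<in>UNIV. x' k \<bullet> x' k) + n * m"
      by (simp add: r sum.distrib n_def)
    have e2: "(\<Sum>k\<in>UNIV. x' k \<bullet> x' k) = n * m" using n0 by (simp add: m_def)
    show ?thesis unfolding e1 e2 using n0 by (simp add: field_simps)
  qed
  have s': "(1 / real CARD('n)) * (\<Sum>k\<in>UNIV. r k) = 2 * m" using s by (simp add: n_def)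
  have lhs: "(x i - c) \<bullet> (x j - c) = x' i \<bullet> x' j" by (simp add: x'_def)
  show ?thesis
    apply (subst s')
    apply (simp only: lhs r d)
    apply (simp add: algebra_simps)
    done
qed

lemma mean_norm:
  fixes c :: "'n::finite \<Rightarrow> real"
  shows "norm (\<chi> i. c i - (1 / real CARD('n)) * (\<Sum>k\<in>UNIV. c k)) \<le> norm (\<chi> i. c i)"
proof -
  define n where "n = real CARD('n)"
  have n0: "n > 0" by (simp add: n_def)
  define \<mu> where "\<mu> = (1/n) * (\<Sum>k\<in>UNIV. c k)"
  have sc: "(\<Sum>k\<in>UNIV. c k) = n * \<mu>" using n0 by (simp add: \<mu>_def)
  have "(norm (\<chi> i. c i - \<mu>))^2 = (\<Sum>i\<in>UNIV. (c i - \<mu>)^2)"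
    by (simp add: norm_vec_def L2_set_def sum_nonneg)
  also have "\<dots> = (\<Sum>i\<in>UNIV. (c i)^2 - (2 * \<mu>) * c i + \<mu>^2)"
    by (rule sum.cong) (simp_all add: power2_diff mult.commute mult.left_commute)
  also have "\<dots> = (\<Sum>i\<in>UNIV. (c i)^2) - (\<Sum>i\<in>UNIV. (2 * \<mu>) * c i) + n * \<mu>^2"
    by (simp add: sum.distrib sum_subtractf n_def)
  also have "\<dots> = (\<Sum>i\<in>UNIV. (c i)^2) - 2 * \<mu> * (\<Sum>i\<in>UNIV. c i) + n * \<mu>^2"
    by (simp only: sum_distrib_left)
  also have "\<dots> = (\<Sum>i\<in>UNIV. (c i)^2) - n * \<mu>^2" by (simp add: sc power2_eq_square)
  also have "\<dots> \<le> (\<Sum>i\<in>UNIV. (c i)^2)" using n0 by simp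
  also have "\<dots> = (norm (\<chi> i. c i))^2" by (simp add: norm_vec_def L2_set_def sum_nonneg)
  finally have "(norm (\<chi> i. c i - \<mu>))^2 \<le> (norm (\<chi> i. c i))^2" .
  then have "norm (\<chi> i. c i - \<mu>) \<le> norm (\<chi> i. c i)"
    by (rule power2_le_imp_le) simp
  then show ?thesis by (simp add: \<mu>_def n_def)
qed




lemma col_bound:
  fixes \<delta> :: "'n::finite \<Rightarrow> 'n \<Rightarrow> real"
  assumes sym: "\<And>i j. \<delta> i j = \<delta> j i"
  defines "\<rho> \<equiv> \<lambda>i. (1 / real CARD('n)) * (\<Sum>k\<in>UNIV. \<delta> i k)"
  shows "(\<Sum>j\<in>UNIV. norm (\<chi> i. -(1/2) * (\<delta> i j - \<rho> i - \<rho> j + (1 / real CARD('n)) * (\<Sum>k\<in>UNIV. \<rho> k))))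
           \<le> (\<Sum>i\<in>UNIV. \<Sum>j\<in>UNIV. \<bar>\<delta> i j\<bar>)"
proof -
  define n where "n = real CARD('n)"
  have n0: "n > 0" by (simp add: n_def)
  have rho_abs: "(\<Sum>i\<in>UNIV. \<bar>\<rho> i\<bar>) \<le> (1/n) * (\<Sum>i\<in>UNIV. \<Sum>k\<in>UNIV. \<bar>\<delta> i k\<bar>)"
  proof -
    have "\<bar>\<rho> i\<bar> \<le> (1/n) * (\<Sum>k\<in>UNIV. \<bar>\<delta> i k\<bar>)" for i
    proof -
      have "\<bar>\<rho> i\<bar> = (1/n) * \<bar>\<Sum>k\<in>UNIV. \<delta> i k\<bar>" using n0 by (simp add: \<rho>_def n_def abs_mult)
      also have "\<dots> \<le> (1/n) * (\<Sum>k\<in>UNIV. \<bar>\<delta> i k\<bar>)"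
        using n0 by (intro mult_left_mono sum_abs) auto
      finally show ?thesis .
    qed
    then have "(\<Sum>i\<in>UNIV. \<bar>\<rho> i\<bar>) \<le> (\<Sum>i\<in>UNIV. (1/n) * (\<Sum>k\<in>UNIV. \<bar>\<delta> i k\<bar>))"
      by (rule sum_mono)
    then show ?thesis by (simp add: sum_distrib_left)
  qed
  have colj: "norm (\<chi> i. -(1/2) * (\<delta> i j - \<rho> i - \<rho> j + (1/n) * (\<Sum>k\<in>UNIV. \<rho> k)))
        \<le> (1/2) * ((\<Sum>i\<in>UNIV. \<bar>\<delta> i j\<bar>) + (\<Sum>i\<in>UNIV. \<bar>\<rho> i\<bar>))" for j
  proof -
    define c where "c = (\<lambda>i. \<delta> i j - \<rho> i)"
    have mc: "(1/n) * (\<Sum>k\<in>UNIV. c k) = \<rho> j - (1/n) * (\<Sum>k\<in>UNIV. \<rho> k)"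
    proof -
      have "(\<Sum>k\<in>UNIV. c k) = (\<Sum>k\<in>UNIV. \<delta> j k) - (\<Sum>k\<in>UNIV. \<rho> k)"
        by (simp add: c_def sum_subtractf sym)
      then show ?thesis using n0 by (simp add: \<rho>_def n_def right_diff_distrib)
    qed
    have veq: "(\<chi> i. -(1/2) * (\<delta> i j - \<rho> i - \<rho> j + (1/n) * (\<Sum>k\<in>UNIV. \<rho> k)))
           = (-(1/2)) *\<^sub>R (\<chi> i. c i - (1/n) * (\<Sum>k\<in>UNIV. c k))"
      by (simp only: mc) (simp add: vec_eq_iff c_def algebra_simps)
    have "norm (\<chi> i. -(1/2) * (\<delta> i j - \<rho> i - \<rho> j + (1/n) * (\<Sum>k\<in>UNIV. \<rho> k)))
          = (1/2) * norm (\<chi> i. c i - (1/n) * (\<Sum>k\<in>UNIV. c k))"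
      by (simp only: veq norm_scaleR; simp)
    also have "\<dots> \<le> (1/2) * norm (\<chi> i. c i)"
      using mean_norm[of c] by (simp add: n_def)
    also have "norm (\<chi> i. c i) \<le> (\<Sum>i\<in>UNIV. \<bar>c i\<bar>)"
      using norm_le_l1_cart[of "\<chi> i. c i"] by simp
    also have "(\<Sum>i\<in>UNIV. \<bar>c i\<bar>) \<le> (\<Sum>i\<in>UNIV. \<bar>\<delta> i j\<bar> + \<bar>\<rho> i\<bar>)"
      by (rule sum_mono) (simp add: c_def abs_triangle_ineq4)
    finally show ?thesis by (simp add: sum.distrib)
  qed
  have "(\<Sum>j\<in>UNIV. norm (\<chi> i. -(1/2) * (\<delta> i j - \<rho> i - \<rho> j + (1/n) * (\<Sum>k\<in>UNIV. \<rho> k))))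
     \<le> (\<Sum>j\<in>UNIV. (1/2) * ((\<Sum>i\<in>UNIV. \<bar>\<delta> i j\<bar>) + (\<Sum>i\<in>UNIV. \<bar>\<rho> i\<bar>)))"
    by (rule sum_mono) (rule colj)
  also have "\<dots> = (1/2) * ((\<Sum>j\<in>UNIV. \<Sum>i\<in>UNIV. \<bar>\<delta> i j\<bar>) + n * (\<Sum>i\<in>UNIV. \<bar>\<rho> i\<bar>))"
  proof -
    have "(\<Sum>j\<in>UNIV. (1/2) * ((\<Sum>i\<in>UNIV. \<bar>\<delta> i j\<bar>) + (\<Sum>i\<in>UNIV. \<bar>\<rho> i\<bar>)))
        = (1/2) * (\<Sum>j\<in>UNIV. (\<Sum>i\<in>UNIV. \<bar>\<delta> i j\<bar>) + (\<Sum>i\<in>UNIV. \<bar>\<rho> i\<bar>))"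
      by (simp only: sum_distrib_left)
    also have "(\<Sum>j\<in>UNIV. (\<Sum>i\<in>UNIV. \<bar>\<delta> i j\<bar>) + (\<Sum>i\<in>UNIV. \<bar>\<rho> i\<bar>))
        = (\<Sum>j\<in>UNIV. \<Sum>i\<in>UNIV. \<bar>\<delta> i j\<bar>) + n * (\<Sum>i\<in>UNIV. \<bar>\<rho> i\<bar>)"
      by (simp only: sum.distrib) (simp add: n_def)
    finally show ?thesis .
  qed
  also have "\<dots> \<le> (1/2) * ((\<Sum>i\<in>UNIV. \<Sum>j\<in>UNIV. \<bar>\<delta> i j\<bar>) + (\<Sum>i\<in>UNIV. \<Sum>j\<in>UNIV. \<bar>\<delta> i j\<bar>))"
  proof -
    have "n * (\<Sum>i\<in>UNIV. \<bar>\<rho> i\<bar>) \<le> n * ((1/n) * (\<Sum>i\<in>UNIV. \<Sum>k\<in>UNIV. \<bar>\<delta> i k\<bar>))"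
      using rho_abs n0 by (intro mult_left_mono) auto
    then have "n * (\<Sum>i\<in>UNIV. \<bar>\<rho> i\<bar>) \<le> (\<Sum>i\<in>UNIV. \<Sum>k\<in>UNIV. \<bar>\<delta> i k\<bar>)" using n0 by simp
    moreover have "(\<Sum>j\<in>UNIV. \<Sum>i\<in>UNIV. \<bar>\<delta> i j\<bar>) = (\<Sum>i\<in>UNIV. \<Sum>j\<in>UNIV. \<bar>\<delta> i j\<bar>)"
      by (rule sum.swap)
    ultimately show ?thesis by simp
  qed
  finally show ?thesis by (simp add: n_def)
qed

lemma gram_col_bound:
  fixes x z :: "'n::finite \<Rightarrow> real^'d"
  defines "cx \<equiv> (1 / real CARD('n)) *\<^sub>R (\<Sum>k\<in>UNIV. x k)"
  defines "cz \<equiv> (1 / real CARD('n)) *\<^sub>R (\<Sum>k\<in>UNIV. z k)"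
  shows "(\<Sum>j\<in>UNIV. norm (\<chi> i. (x i - cx) \<bullet> (x j - cx) - (z i - cz) \<bullet> (z j - cz)))
          \<le> (\<Sum>i\<in>UNIV. \<Sum>j\<in>UNIV. \<bar>(norm (x i - x j))^2 - (norm (z i - z j))^2\<bar>)"
proof -
  define n where "n = real CARD('n)"
  define \<delta> where "\<delta> = (\<lambda>i j. (norm (x i - x j))^2 - (norm (z i - z j))^2)"
  have sym: "\<delta> i j = \<delta> j i" for i j by (simp add: \<delta>_def norm_minus_commute)
  define rx where "rx = (\<lambda>i. (1 / n) * (\<Sum>k\<in>UNIV. (norm (x i - x k))^2))"
  define rz where "rz = (\<lambda>i. (1 / n) * (\<Sum>k\<in>UNIV. (norm (z i - z k))^2))"
  define \<rho> where "\<rho> = (\<lambda>i. (1 / n) * (\<Sum>k\<in>UNIV. \<delta> i k))"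
  have rho: "\<rho> i = rx i - rz i" for i
    by (simp add: \<rho>_def rx_def rz_def \<delta>_def sum_subtractf right_diff_distrib)
  have srho: "(1/n) * (\<Sum>k\<in>UNIV. \<rho> k) = (1/n) * (\<Sum>k\<in>UNIV. rx k) - (1/n) * (\<Sum>k\<in>UNIV. rz k)"
    by (simp add: rho sum_subtractf right_diff_distrib)
  have eq: "(\<chi> i. (x i - cx) \<bullet> (x j - cx) - (z i - cz) \<bullet> (z j - cz)) =
            (\<chi> i. -(1/2) * (\<delta> i j - \<rho> i - \<rho> j + (1 / n) * (\<Sum>k\<in>UNIV. \<rho> k)))" for j
  proof -
    have "(x i - cx) \<bullet> (x j - cx) - (z i - cz) \<bullet> (z j - cz) =
          -(1/2) * (\<delta> i j - \<rho> i - \<rho> j + (1 / n) * (\<Sum>k\<in>UNIV. \<rho> k))" for i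
      unfolding cx_def cz_def center_gram srho
      by (simp add: rho rx_def rz_def \<delta>_def n_def algebra_simps)
    then show ?thesis by (simp add: vec_eq_iff)
  qed
  show ?thesis
    unfolding eq using col_bound[of \<delta>, OF sym] by (simp add: \<rho>_def n_def \<delta>_def)
qed




lemma trace_frob: "trace ((Z::real^'n^'d) ** transpose Z) = (\<Sum>j\<in>UNIV. (norm (column j Z))^2)"
  by (simp only: trace_mul_sym[of Z] trace_tm power2_norm_eq_inner)

lemma orth_inner:
  assumes "orthogonal_matrix (R::real^'d^'d)"
  shows "(R *v u) \<bullet> (R *v w) = u \<bullet> w"
proof -
  have "(R *v u) \<bullet> (R *v w) = ((R *v u) v* R) \<bullet> w" by (simp only: dot_lmul_matrix)
  also have "(R *v u) v* R = (transpose R ** R) *v u"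
    by (simp flip: matrix_vector_mul_assoc)
  also have "\<dots> = u" using assms by (simp add: orthogonal_matrix)
  finally show ?thesis .
qed

lemma column_diff: "column j ((A::real^'n^'m) - B) = column j A - column j B"
  by (simp add: column_def vec_eq_iff)

lemma key:
  fixes x z :: "'n::finite \<Rightarrow> real^'d"
  shows "\<exists>R t. orthogonal_matrix R \<and>
     (\<Sum>j\<in>UNIV. (norm (x j - R *v z j + t))^2)
       \<le> 2 * (\<Sum>i\<in>UNIV. \<Sum>j\<in>UNIV. \<bar>(norm (x i - x j))^2 - (norm (z i - z j))^2\<bar>)"
proof -
  define cx where "cx = (1 / real CARD('n)) *\<^sub>R (\<Sum>k\<in>UNIV. x k)"
  define cz where "cz = (1 / real CARD('n)) *\<^sub>R (\<Sum>k\<in>UNIV. z k)"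
  define Xm :: "real^'n^'d" where "Xm = (\<chi> k i. (x i - cx) $ k)"
  define Z0 :: "real^'n^'d" where "Z0 = (\<chi> k i. (z i - cz) $ k)"
  have cX: "column j Xm = x j - cx" for j by (simp add: Xm_def column_def vec_eq_iff)
  have cZ: "column j Z0 = z j - cz" for j by (simp add: Z0_def column_def vec_eq_iff)
  define N where "N = Z0 ** transpose Xm"
  obtain R where R: "orthogonal_matrix R"
    and Ropt: "\<And>G. orthogonal_matrix G \<Longrightarrow> trace (G ** R ** N) \<le> trace (R ** N)"
    using opt_exists[of N] by blast
  define K where "K = R ** N"
  have optK: "trace (G ** K) \<le> trace K" if "orthogonal_matrix G" for G
    using Ropt[OF that] by (simp add: K_def matrix_mul_assoc)
  have Ksym: "transpose K = K" by (rule opt_sym) (rule optK)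
  have Kpsd: "0 \<le> v \<bullet> (K *v v)" for v by (rule opt_psd) (rule optK)
  define Ym where "Ym = R ** Z0"
  have cY: "column j Ym = R *v (z j - cz)" for j by (simp add: Ym_def column_mm cZ)
  have MK: "Xm ** transpose Ym = K"
  proof -
    have "Xm ** transpose Ym = transpose K"
      by (simp add: K_def N_def Ym_def matrix_transpose_mul matrix_mul_assoc)
    then show ?thesis using Ksym by simp
  qed
  have c: "trace ((Xm - Ym) ** transpose (Xm - Ym)) \<le>
           2 * (\<Sum>j\<in>UNIV. norm (column j (transpose Xm ** Xm - transpose Ym ** Ym)))"
    by (rule core) (simp_all only: MK Ksym Kpsd)
  define t where "t = R *v cz - cx"
  have lhs: "trace ((Xm - Ym) ** transpose (Xm - Ym)) = (\<Sum>j\<in>UNIV. (norm (x j - R *v z j + t))^2)"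
  proof -
    have "column j (Xm - Ym) = x j - R *v z j + t" for j
      by (simp add: column_diff cX cY t_def matrix_vector_mult_diff_distrib)
    then show ?thesis by (simp only: trace_frob)
  qed
  have colD: "column j (transpose Xm ** Xm - transpose Ym ** Ym) =
        (\<chi> i. (x i - cx) \<bullet> (x j - cx) - (z i - cz) \<bullet> (z j - cz))" for j
  proof -
    have "(transpose Xm ** Xm) $ i $ j = (x i - cx) \<bullet> (x j - cx)" for i
      by (simp add: matrix_mult_transpose_dot_column cX)
    moreover have "(transpose Ym ** Ym) $ i $ j = (z i - cz) \<bullet> (z j - cz)" for i
      by (simp add: matrix_mult_transpose_dot_column cY orth_inner[OF R])
    ultimately show ?thesis by (simp add: column_def vec_eq_iff)
  qed
  have "(\<Sum>j\<in>UNIV. (norm (x j - R *v z j + t))^2)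
        \<le> 2 * (\<Sum>j\<in>UNIV. norm (\<chi> i. (x i - cx) \<bullet> (x j - cx) - (z i - cz) \<bullet> (z j - cz)))"
    using c by (simp only: lhs colD)
  also have "\<dots> \<le> 2 * (\<Sum>i\<in>UNIV. \<Sum>j\<in>UNIV. \<bar>(norm (x i - x j))^2 - (norm (z i - z j))^2\<bar>)"
    using gram_col_bound[of x z] by (simp add: cx_def cz_def)
  finally show ?thesis using R by blast
qed


lemma orth_norm:
  assumes "orthogonal_matrix (R::real^'d^'d)"
  shows "norm (R *v u) = norm u"
  using orth_inner[OF assms, of u u] by (simp add: norm_eq_sqrt_inner)

lemma sum_le_sqrt:
  fixes e :: "'n::finite \<Rightarrow> real"
  shows "(\<Sum>i\<in>UNIV. e i) \<le> sqrt (real CARD('n)) * sqrt (\<Sum>i\<in>UNIV. (e i)^2)"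
proof -
  have "(\<Sum>i\<in>UNIV. 1 * e i)^2 \<le> (\<Sum>i\<in>(UNIV::'n set). 1^2) * (\<Sum>i\<in>UNIV. (e i)^2)"
    by (rule Cauchy_Schwarz_ineq_sum)
  then have "(\<Sum>i\<in>UNIV. e i)^2 \<le> real CARD('n) * (\<Sum>i\<in>UNIV. (e i)^2)" by simp
  then have "(\<Sum>i\<in>UNIV. e i) \<le> sqrt (real CARD('n) * (\<Sum>i\<in>UNIV. (e i)^2))"
    by (rule real_le_rsqrt)
  then show ?thesis by (simp add: real_sqrt_mult)
qed

lemma card_powr: "real CARD('n::finite) powr (3/2) = real CARD('n) * sqrt (real CARD('n))"
proof -
  have n: "real CARD('n) > 0" by simp
  have "real CARD('n) powr (3/2) = real CARD('n) powr (1 + 1/2)" by simp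
  also have "\<dots> = real CARD('n) powr 1 * real CARD('n) powr (1/2)" by (rule powr_add)
  also have "\<dots> = real CARD('n) * sqrt (real CARD('n))" using n by (simp add: powr_half_sqrt)
  finally show ?thesis .
qed

theorem theorem1:
  fixes X Y :: "'n::finite \<Rightarrow> real^'d"
  shows "hard_gw_dist X Y \<le> 2 * real CARD('n) powr (3/2) * procrustes_dist X Y \<and>
         (norm_1_2 X \<le> 1 \<longrightarrow> norm_1_2 Y \<le> 1 \<longrightarrow>
          (1 / (4 * real CARD('n) + 2)) * (procrustes_dist X Y)\<^sup>2 \<le> hard_gw_dist X Y)"
proof -
  define n where "n = real CARD('n)"
  have n1: "n \<ge> 1" by (simp add: n_def)
  define f where "f = (\<lambda>\<pi>. (\<Sum>i\<in>UNIV. \<Sum>j\<in>UNIV. \<bar>norm (X i - X j) - norm (Y (\<pi> i) - Y (\<pi> j))\<bar>))"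
  define g where "g = (\<lambda>\<pi> (R::real^'d^'d) t. (\<Sum>j\<in>UNIV. (norm (X j - R *v Y (\<pi> j) + t))\<^sup>2))"
  define SH where "SH = {f \<pi> | \<pi>. \<pi> permutes (UNIV::'n set)}"
  define SP where "SP = {g \<pi> R t | \<pi> R t. \<pi> permutes (UNIV::'n set) \<and> orthogonal_matrix R}"
  have hd: "hard_gw_dist X Y = Min SH" by (simp add: hard_gw_dist_def SH_def f_def)
  have pd: "procrustes_dist X Y = sqrt (Inf SP)" by (simp add: procrustes_dist_def SP_def g_def)
  have SHfin: "finite SH"
  proof -
    have "SH = f ` {\<pi>. \<pi> permutes (UNIV::'n set)}" by (auto simp: SH_def)
    then show ?thesis using finite_permutations[of "UNIV::'n set"] by simp
  qed
  have SHne: "SH \<noteq> {}"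
  proof -
    have "f id \<in> SH" unfolding SH_def using permutes_id by blast
    then show ?thesis by blast
  qed
  have fnn: "f \<pi> \<ge> 0" for \<pi> by (simp add: f_def sum_nonneg)
  have hle: "hard_gw_dist X Y \<le> f \<pi>" if "\<pi> permutes UNIV" for \<pi>
    unfolding hd using SHfin that by (intro Min_le) (auto simp: SH_def)
  obtain \<pi>0 where \<pi>0: "\<pi>0 permutes UNIV" and h0: "hard_gw_dist X Y = f \<pi>0"
    using Min_in[OF SHfin SHne] unfolding hd SH_def by auto
  have hnn: "hard_gw_dist X Y \<ge> 0" using h0 fnn by simp
  have gnn: "g \<pi> R t \<ge> 0" for \<pi> R t by (simp add: g_def sum_nonneg)
  have SPne: "SP \<noteq> {}"
  proof -
    have "g id (mat 1) 0 \<in> SP" unfolding SP_def using permutes_id orthogonal_matrix_id by blast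
    then show ?thesis by blast
  qed
  have SPbdd: "bdd_below SP" unfolding bdd_below_def SP_def using gnn by blast
  have Inf_le: "Inf SP \<le> g \<pi> R t" if "\<pi> permutes UNIV" "orthogonal_matrix R" for \<pi> R t
    using that by (intro cInf_lower SPbdd) (auto simp: SP_def)
  have Infnn: "Inf SP \<ge> 0" using SPne gnn by (intro cInf_greatest) (auto simp: SP_def)
  define K where "K = 2 * n * sqrt n"
  have K0: "K > 0" using n1 by (simp add: K_def)
  have part1: "hard_gw_dist X Y \<le> K * sqrt (Inf SP)"
  proof -
    have fb: "hard_gw_dist X Y \<le> K * sqrt (g \<pi> R t)" if \<pi>: "\<pi> permutes UNIV" and R: "orthogonal_matrix R" for \<pi> R t
    proof -
      define e where "e = (\<lambda>i. norm (X i - R *v Y (\<pi> i) + t))"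
      have tb: "\<bar>norm (X i - X j) - norm (Y (\<pi> i) - Y (\<pi> j))\<bar> \<le> e i + e j" for i j
      proof -
        have "norm (Y (\<pi> i) - Y (\<pi> j)) = norm (R *v Y (\<pi> i) - R *v Y (\<pi> j))"
          using orth_norm[OF R, of "Y (\<pi> i) - Y (\<pi> j)"] by (simp add: matrix_vector_mult_diff_distrib)
        moreover have "\<bar>norm (X i - X j) - norm (R *v Y (\<pi> i) - R *v Y (\<pi> j))\<bar>
             \<le> norm ((X i - X j) - (R *v Y (\<pi> i) - R *v Y (\<pi> j)))"
          by (rule norm_triangle_ineq3)
        moreover have "(X i - X j) - (R *v Y (\<pi> i) - R *v Y (\<pi> j)) =
               (X i - R *v Y (\<pi> i) + t) - (X j - R *v Y (\<pi> j) + t)" by (simp add: algebra_simps)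
        moreover have "norm ((X i - R *v Y (\<pi> i) + t) - (X j - R *v Y (\<pi> j) + t)) \<le> e i + e j"
          unfolding e_def by (rule norm_triangle_ineq4)
        ultimately show ?thesis by simp
      qed
      have "f \<pi> \<le> (\<Sum>i\<in>UNIV. \<Sum>j\<in>UNIV. e i + e j)"
        unfolding f_def by (intro sum_mono tb)
      also have "\<dots> = 2 * n * (\<Sum>i\<in>UNIV. e i)"
      proof -
        have "(\<Sum>i\<in>UNIV. \<Sum>j\<in>UNIV. e i + e j) = (\<Sum>i\<in>UNIV. n * e i + (\<Sum>j\<in>UNIV. e j))"
          by (simp add: sum.distrib n_def)
        also have "\<dots> = n * (\<Sum>i\<in>UNIV. e i) + n * (\<Sum>j\<in>UNIV. e j)"
          by (simp add: sum.distrib sum_distrib_left n_def)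
        finally show ?thesis by simp
      qed
      also have "\<dots> \<le> 2 * n * (sqrt n * sqrt (\<Sum>i\<in>UNIV. (e i)^2))"
        using n1 sum_le_sqrt[of e] by (intro mult_left_mono) (auto simp: n_def)
      also have "(\<Sum>i\<in>UNIV. (e i)^2) = g \<pi> R t" by (simp add: e_def g_def)
      finally have "f \<pi> \<le> K * sqrt (g \<pi> R t)" by (simp add: K_def mult.assoc)
      then show ?thesis using hle[OF \<pi>] by simp
    qed
    have "(hard_gw_dist X Y / K)^2 \<le> Inf SP"
    proof (rule cInf_greatest[OF SPne])
      fix s assume "s \<in> SP"
      then obtain \<pi> R t where \<pi>: "\<pi> permutes UNIV" and R: "orthogonal_matrix R" and s: "s = g \<pi> R t"
        by (auto simp: SP_def)
      have "hard_gw_dist X Y / K \<le> sqrt (g \<pi> R t)" using fb[OF \<pi> R, of t] K0 by (simp add: divide_le_eq mult.commute)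
      then have "(hard_gw_dist X Y / K)^2 \<le> (sqrt (g \<pi> R t))^2"
        using hnn K0 by (intro power_mono) auto
      then show "(hard_gw_dist X Y / K)^2 \<le> s" using gnn[of \<pi> R t] s by simp
    qed
    then have "hard_gw_dist X Y / K \<le> sqrt (Inf SP)" by (rule real_le_rsqrt)
    then show ?thesis using K0 by (simp add: divide_le_eq mult.commute)
  qed
  have A: "hard_gw_dist X Y \<le> 2 * real CARD('n) powr (3/2) * procrustes_dist X Y"
    using part1 by (simp add: pd K_def card_powr n_def mult.assoc)
  have B: "(1 / (4 * real CARD('n) + 2)) * (procrustes_dist X Y)\<^sup>2 \<le> hard_gw_dist X Y"
    if bx: "norm_1_2 X \<le> 1" and by': "norm_1_2 Y \<le> 1"
  proof -
    have nX: "norm (X i) \<le> 1" for i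
    proof -
      have "norm (X i) \<le> Max (range (\<lambda>i. norm (X i)))" by (rule Max_ge) auto
      then show ?thesis using bx by (simp add: norm_1_2_def)
    qed
    have nY: "norm (Y i) \<le> 1" for i
    proof -
      have "norm (Y i) \<le> Max (range (\<lambda>i. norm (Y i)))" by (rule Max_ge) auto
      then show ?thesis using by' by (simp add: norm_1_2_def)
    qed
    define z where "z = (\<lambda>i. Y (\<pi>0 i))"
    obtain R t where R: "orthogonal_matrix R" and
      kb: "(\<Sum>j\<in>UNIV. (norm (X j - R *v z j + t))^2)
             \<le> 2 * (\<Sum>i\<in>UNIV. \<Sum>j\<in>UNIV. \<bar>(norm (X i - X j))^2 - (norm (z i - z j))^2\<bar>)"
      using key[of X z] by blast
    have sq: "\<bar>(norm (X i - X j))^2 - (norm (z i - z j))^2\<bar> \<le>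
              4 * \<bar>norm (X i - X j) - norm (Y (\<pi>0 i) - Y (\<pi>0 j))\<bar>" for i j
    proof -
      define a where "a = norm (X i - X j)"
      define b where "b = norm (z i - z j)"
      have a2: "a \<le> 2" unfolding a_def using norm_triangle_ineq4[of "X i" "X j"] nX[of i] nX[of j] by linarith
      have b2: "b \<le> 2" unfolding b_def using norm_triangle_ineq4[of "z i" "z j"] nY[of "\<pi>0 i"] nY[of "\<pi>0 j"]
        by (simp add: z_def)
      have a0: "a \<ge> 0" "b \<ge> 0" by (simp_all add: a_def b_def)
      have "a^2 - b^2 = (a - b) * (a + b)" by (simp add: power2_eq_square algebra_simps)
      then have "\<bar>a^2 - b^2\<bar> = \<bar>a - b\<bar> * (a + b)"
        using a0 by (simp add: abs_mult)
      also have "\<dots> \<le> \<bar>a - b\<bar> * 4" using a2 b2 by (intro mult_left_mono) auto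
      finally show ?thesis by (simp add: a_def b_def z_def mult.commute)
    qed
    have "(\<Sum>i\<in>UNIV. \<Sum>j\<in>UNIV. \<bar>(norm (X i - X j))^2 - (norm (z i - z j))^2\<bar>)
          \<le> (\<Sum>i\<in>UNIV. \<Sum>j\<in>UNIV. 4 * \<bar>norm (X i - X j) - norm (Y (\<pi>0 i) - Y (\<pi>0 j))\<bar>)"
      by (intro sum_mono sq)
    also have "\<dots> = 4 * f \<pi>0" by (simp add: f_def sum_distrib_left)
    finally have s4: "(\<Sum>i\<in>UNIV. \<Sum>j\<in>UNIV. \<bar>(norm (X i - X j))^2 - (norm (z i - z j))^2\<bar>) \<le> 4 * f \<pi>0" .
    have "Inf SP \<le> g \<pi>0 R t" by (rule Inf_le[OF \<pi>0 R])
    also have "g \<pi>0 R t = (\<Sum>j\<in>UNIV. (norm (X j - R *v z j + t))^2)" by (simp add: g_def z_def)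
    finally have I8: "Inf SP \<le> 8 * hard_gw_dist X Y" using kb s4 h0 by linarith
    have I6: "Inf SP \<le> (4 * n + 2) * hard_gw_dist X Y"
    proof (cases "CARD('n) = 1")
      case True
      have eq: "i = j" for i j :: 'n
      proof -
        obtain a :: 'n where "UNIV = {a}" using card_1_singletonE[of "UNIV::'n set"] True by auto
        then show ?thesis by (metis UNIV_I singletonD)
      qed
      have "f \<pi>0 = 0" unfolding f_def
      proof (rule sum.neutral, rule ballI, rule sum.neutral, rule ballI)
        fix i j :: 'n
        have "j = i" by (rule eq)
        then show "\<bar>norm (X i - X j) - norm (Y (\<pi>0 i) - Y (\<pi>0 j))\<bar> = 0" by simp
      qed
      then show ?thesis using I8 h0 by simp
    next
      case False
      then have "CARD('n) \<ge> 2" using zero_less_card_finite[where 'a='n] by linarith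
      then have "8 \<le> 4 * n + 2" by (simp add: n_def)
      then have "8 * hard_gw_dist X Y \<le> (4 * n + 2) * hard_gw_dist X Y"
        using hnn by (intro mult_right_mono) auto
      then show ?thesis using I8 by linarith
    qed
    have p2: "(procrustes_dist X Y)^2 = Inf SP" using Infnn by (simp add: pd)
    have pos: "4 * n + 2 > 0" using n1 by simp
    show ?thesis unfolding p2 using I6 pos by (simp add: n_def[symmetric] divide_le_eq mult.commute)
  qed
  show ?thesis using A B by blast
qed

end
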